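(* Let $\mathcal L_n\subset\mathbb C[z_1,z_2,\theta_1,\theta_2]$ be the left ideal generated by $L_1$ and $L_2$. Then its restriction $\mathcal L_n|_{z_2=0}$ is the left ideal of $\mathbb C[z_1,\theta_1]$ generated by $$L:=\theta_1^2-a_0z_1(\theta_1+a_1)(\theta_1+a_2).$$
   Context: $\mathbb C[z_1,z_2,\theta_1,\theta_2]$ denotes the non-commutative ring with relations $\theta_iz_i=z_i(\theta_i+1)$ ($i=1,2$), all other pairs of generators commuting; $\theta_i$ is interpreted as $z_i\partial/\partial z_i$. For a left ideal $\mathcal I$ of this ring, its restriction to $z_2=0$ is $\mathcal I|_{z_2=0}=\{A\in\mathbb C[z_1,\theta_1]:\ \exists B_1,B_2\in\mathbb C[z_1,z_2,\theta_1,\theta_2],\ A+z_2B_1+\theta_2B_2\in\mathcal I\}$. Fix an integer $n\ge1$ and constants $a_0\neq0,a_1,a_2$, and $L_1=-n\theta_1\theta_2+\theta_1^2-a_0z_1(\theta_1+a_1)(\theta_1+a_2)$, $L_2=\theta_2^{n}-(-1)^n z_2\,(n\theta_2-\theta_1)(n\theta_2-\theta_1+1)\cdots(n\theta_2-\theta_1+n-1)$. *)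

theory Defs
  imports "HOL-Computational_Algebra.Polynomial"
begin

text \<open>
  The ring C[z1,z2,theta1,theta2] with theta_i z_i = z_i (theta_i + 1).
  Every element has a unique normal form  sum_{(i,j)} z1^i z2^j P_{i,j}(theta1,theta2)
  (z's on the left).  An element is represented by the coefficient function
  (i,j) |-> P_{i,j}, where P_{i,j} :: complex poly poly is a polynomial in theta2 whose
  coefficients are polynomials in theta1.
\<close>

type_synonym wop = "nat \<times> nat \<Rightarrow> complex poly poly"

definition wfin :: "wop \<Rightarrow> bool" where
  "wfin f \<longleftrightarrow> finite {k. f k \<noteq> 0}"

text \<open>P(theta1,theta2) * z1^b1 z2^b2 = z1^b1 z2^b2 P(theta1+b1, theta2+b2)\<close>
definition wshift :: "nat \<Rightarrow> nat \<Rightarrow> complex poly poly \<Rightarrow> complex poly poly" where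
  "wshift b1 b2 P = pcompose (map_poly (\<lambda>p. pcompose p [:of_nat b1, 1:]) P) [:[:of_nat b2:], 1:]"

definition wmul :: "wop \<Rightarrow> wop \<Rightarrow> wop" where
  "wmul f g = (\<lambda>(i,j). \<Sum>a\<le>i. \<Sum>b\<le>j. wshift (i - a) (j - b) (f (a,b)) * g (i - a, j - b))"

definition wadd :: "wop \<Rightarrow> wop \<Rightarrow> wop" where
  "wadd f g = (\<lambda>k. f k + g k)"

definition wsmul :: "complex \<Rightarrow> wop \<Rightarrow> wop" where
  "wsmul c f = (\<lambda>k. [:[:c:]:] * f k)"

definition wconst :: "complex poly poly \<Rightarrow> wop" where
  "wconst P = (\<lambda>k. if k = (0,0) then P else 0)"

definition wone :: wop where "wone = wconst 1"
definition wc :: "complex \<Rightarrow> wop" where "wc c = wconst [:[:c:]:]"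
definition wz1 :: wop where "wz1 = (\<lambda>k. if k = (1,0) then 1 else 0)"
definition wz2 :: wop where "wz2 = (\<lambda>k. if k = (0,1) then 1 else 0)"
definition wth1 :: wop where "wth1 = wconst [:[:0, 1:]:]"
definition wth2 :: wop where "wth2 = wconst [:0, 1:]"

definition wpow :: "wop \<Rightarrow> nat \<Rightarrow> wop" where
  "wpow f m = (wmul f ^^ m) wone"

definition left_ideal_gen :: "wop list \<Rightarrow> wop set" where
  "left_ideal_gen gs = {foldr wadd (map2 wmul ps gs) (\<lambda>_. 0) | ps.
       length ps = length gs \<and> (\<forall>p\<in>set ps. wfin p)}"

text \<open>The subring C[z1,theta1]: no z2, no theta2.\<close>
definition in_sub1 :: "wop \<Rightarrow> bool" where
  "in_sub1 f \<longleftrightarrow> wfin f \<and> (\<forall>i j. j \<noteq> 0 \<longrightarrow> f (i,j) = 0) \<and> (\<forall>i. degree (f (i,0)) = 0)"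

definition restrict_z2 :: "wop set \<Rightarrow> wop set" where
  "restrict_z2 I = {A. in_sub1 A \<and> (\<exists>B1 B2. wfin B1 \<and> wfin B2 \<and>
       wadd A (wadd (wmul wz2 B1) (wmul wth2 B2)) \<in> I)}"

definition sub1_left_ideal :: "wop \<Rightarrow> wop set" where
  "sub1_left_ideal g = {wmul Q g | Q. in_sub1 Q}"

definition opL1 :: "nat \<Rightarrow> complex \<Rightarrow> complex \<Rightarrow> complex \<Rightarrow> wop" where
  "opL1 n a0 a1 a2 =
     wadd (wadd (wsmul (- of_nat n) (wmul wth1 wth2)) (wmul wth1 wth1))
          (wsmul (- a0) (wmul wz1 (wmul (wadd wth1 (wc a1)) (wadd wth1 (wc a2)))))"

definition opL2 :: "nat \<Rightarrow> wop" where
  "opL2 n =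
     wadd (wpow wth2 n)
          (wsmul (- ((-1) ^ n)) (wmul wz2
             (foldr wmul
               (map (\<lambda>k. wadd (wadd (wsmul (of_nat n) wth2) (wsmul (-1) wth1)) (wc (of_nat k))) [0..<n])
               wone)))"

definition opL :: "complex \<Rightarrow> complex \<Rightarrow> complex \<Rightarrow> wop" where
  "opL a0 a1 a2 = wadd (wmul wth1 wth1)
          (wsmul (- a0) (wmul wz1 (wmul (wadd wth1 (wc a1)) (wadd wth1 (wc a2)))))"

end

theory Submission imports Defs begin

definition Z :: wop where "Z = (\<lambda>_. 0)"

definition phi :: "wop \<Rightarrow> wop" where
  "phi f = (\<lambda>(i,j). if j = 0 then [:coeff (f (i,0)) 0:] else 0)"

lemma phi_apply: "phi f (i,j) = (if j = 0 then [:coeff (f (i,0)) 0:] else 0)"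
  by (simp add: phi_def)

lemma wmul_apply: "wmul f g (i,j) = (\<Sum>a\<le>i. \<Sum>b\<le>j. wshift (i - a) (j - b) (f (a,b)) * g (i - a, j - b))"
  by (simp add: wmul_def)

lemma wshift_0[simp]: "wshift b1 b2 0 = 0"
  by (simp add: wshift_def)

lemma wshift_00[simp]: "wshift 0 0 P = P"
proof -
  have "map_poly (\<lambda>p. p \<circ>\<^sub>p [:0, 1:]) P = map_poly id P" by (simp add: id_def)
  then show ?thesis by (simp add: wshift_def map_poly_id)
qed

lemma wshift_const: "wshift b1 b2 [:c:] = [:pcompose c [:of_nat b1,1:]:]"
  by (simp add: wshift_def map_poly_pCons)

lemma coeff0_wshift: "coeff (wshift b1 0 P) 0 = pcompose (coeff P 0) [:of_nat b1,1:]"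
  by (simp add: wshift_def coeff_map_poly)

lemma wshift_th2: "wshift i j [:0,1:] = [:[:of_nat j:],1:]"
  by (simp add: wshift_def map_poly_pCons pcompose_pCons one_pCons)

lemma wmul_Z_left[simp]: "wmul Z g = Z"
  by (auto simp: wmul_def Z_def)
lemma wmul_Z_right[simp]: "wmul f Z = Z"
  by (auto simp: wmul_def Z_def)

lemma dsum: "(\<Sum>a\<le>(i::nat). \<Sum>b\<le>(j::nat). if a = i' \<and> b = j' then (c::'a::comm_monoid_add) else 0) = (if i' \<le> i \<and> j' \<le> j then c else 0)"
proof -
  have "(\<Sum>a\<le>(i::nat). \<Sum>b\<le>(j::nat). if a = i' \<and> b = j' then c else 0) = (\<Sum>a\<le>(i::nat). if a = i' then (\<Sum>b\<le>(j::nat). if b = j' then c else 0) else 0)"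
    by (intro sum.cong refl) auto
  then show ?thesis by simp
qed

lemma wmul_const_right: "wmul f (wconst R) (i,j) = f (i,j) * R"
proof -
  have "wmul f (wconst R) (i,j) = (\<Sum>a\<le>i. \<Sum>b\<le>j. if a = i \<and> b = j then f (i,j) * R else 0)"
    unfolding wmul_apply
    by (intro sum.cong refl) (auto simp: wconst_def)
  also have "\<dots> = f (i,j) * R"
    by (simp only: dsum) simp
  finally show ?thesis .
qed

lemma wmul_const_left: "wmul (wconst P) g (i,j) = wshift i j P * g (i,j)"
proof -
  have "wmul (wconst P) g (i,j) = (\<Sum>a\<le>i. \<Sum>b\<le>j. if a = 0 \<and> b = 0 then wshift i j P * g (i,j) else 0)"
    unfolding wmul_apply
    by (intro sum.cong refl) (auto simp: wconst_def)
  also have "\<dots> = wshift i j P * g (i,j)"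
    by (simp only: dsum) simp
  finally show ?thesis .
qed

lemma phi_wmul: "phi (wmul f g) = wmul (phi f) (phi g)"
proof (rule ext, clarify)
  fix i j
  show "phi (wmul f g) (i,j) = wmul (phi f) (phi g) (i,j)"
  proof (cases "j = 0")
    case True
    have "phi (wmul f g) (i,j) = (\<Sum>a\<le>i. [:coeff (wshift (i - a) 0 (f (a,0))) 0 * coeff (g (i-a,0)) 0:])"
      using True by (simp add: phi_apply wmul_apply coeff_sum coeff_mult_0 flip: sum_to_poly)
    also have "\<dots> = wmul (phi f) (phi g) (i,j)"
      using True by (simp add: phi_apply wmul_apply coeff0_wshift wshift_const mult_ac)
    finally show ?thesis .
  next
    case False
    have "wmul (phi f) (phi g) (i,j) = 0"
      unfolding wmul_apply using False
      by (intro sum.neutral ballI) (auto simp: phi_apply)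
    then show ?thesis using False by (simp add: phi_apply)
  qed
qed

lemma wfin_wmul:
  assumes "wfin f" "wfin g" shows "wfin (wmul f g)"
proof -
  let ?Sf = "{k. f k \<noteq> 0}" and ?Sg = "{k. g k \<noteq> 0}"
  have "{k. wmul f g k \<noteq> 0} \<subseteq> (\<lambda>((a,b),(c,d)). (a+c, b+d)) ` (?Sf \<times> ?Sg)"
  proof
    fix k assume "k \<in> {k. wmul f g k \<noteq> 0}"
    then obtain i j where k: "k = (i,j)" and nz: "wmul f g (i,j) \<noteq> 0" by (cases k) auto
    from nz obtain a where a: "a \<le> i" "(\<Sum>b\<le>j. wshift (i - a) (j - b) (f (a,b)) * g (i - a, j - b)) \<noteq> 0"
      unfolding wmul_apply by (metis (no_types, lifting) atMost_iff sum.neutral)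
    then obtain b where b: "b \<le> j" "wshift (i - a) (j - b) (f (a,b)) * g (i - a, j - b) \<noteq> 0"
      by (metis (no_types, lifting) atMost_iff sum.neutral)
    then have "f (a,b) \<noteq> 0" "g (i-a, j-b) \<noteq> 0" by auto
    then have "((a,b),(i-a,j-b)) \<in> ?Sf \<times> ?Sg" by auto
    moreover have "k = (\<lambda>((a,b),(c,d)). (a+c, b+d)) ((a,b),(i-a,j-b))" using k a b by auto
    ultimately show "k \<in> (\<lambda>((a,b),(c,d)). (a+c, b+d)) ` (?Sf \<times> ?Sg)" by blast
  qed
  moreover have "finite (?Sf \<times> ?Sg)" using assms by (simp add: wfin_def)
  ultimately show ?thesis unfolding wfin_def by (meson finite_imageI finite_subset)
qed

lemma wfin_wadd: "wfin f \<Longrightarrow> wfin g \<Longrightarrow> wfin (wadd f g)"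
  unfolding wfin_def wadd_def
  by (rule finite_subset[of _ "{k. f k \<noteq> 0} \<union> {k. g k \<noteq> 0}"]) auto

lemma wfin_wsmul: "wfin f \<Longrightarrow> wfin (wsmul c f)"
  unfolding wfin_def wsmul_def
  by (rule finite_subset[of _ "{k. f k \<noteq> 0}"]) auto

lemma wfin_wconst: "wfin (wconst P)"
  unfolding wfin_def wconst_def
  by (rule finite_subset[of _ "{(0,0)}"]) auto

lemma wfin_basic: "wfin wth1" "wfin wth2" "wfin (wc c)" "wfin Z" "wfin wz1" "wfin wz2"
proof -
  show "wfin wth1" "wfin wth2" "wfin (wc c)" unfolding wth1_def wth2_def wc_def by (rule wfin_wconst)+
  show "wfin Z" by (simp add: wfin_def Z_def)
  show "wfin wz1" unfolding wfin_def wz1_def by (rule finite_subset[of _ "{(1,0)}"]) auto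
  show "wfin wz2" unfolding wfin_def wz2_def by (rule finite_subset[of _ "{(0,1)}"]) auto
qed

lemma wfin_opL: "wfin (opL a0 a1 a2)"
  unfolding opL_def by (intro wfin_wadd wfin_wmul wfin_wsmul wfin_basic)

lemma phi_wadd: "phi (wadd f g) = wadd (phi f) (phi g)"
  by (auto simp: phi_def wadd_def fun_eq_iff)

lemma phi_wsmul: "phi (wsmul c f) = wsmul c (phi f)"
  by (auto simp: phi_def wsmul_def fun_eq_iff coeff_mult_0)

lemma phi_wconst: "phi (wconst P) = wconst [:coeff P 0:]"
  by (auto simp: phi_def wconst_def fun_eq_iff)

lemma phi_basic: "phi wth1 = wth1" "phi wth2 = Z" "phi (wc c) = wc c" "phi Z = Z" "phi wz1 = wz1" "phi wz2 = Z"
  by (auto simp: phi_def wth1_def wth2_def wc_def Z_def wz1_def wz2_def wconst_def fun_eq_iff)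

lemma wadd_Z[simp]: "wadd f Z = f" "wadd Z f = f"
  by (auto simp: wadd_def Z_def)

lemma wsmul_Z[simp]: "wsmul c Z = Z"
  by (auto simp: wsmul_def Z_def)

lemma phi_opL1: "phi (opL1 n a0 a1 a2) = opL a0 a1 a2"
  unfolding opL1_def opL_def
  by (simp add: phi_wadd phi_wsmul phi_wmul phi_basic)

lemma phi_opL: "phi (opL a0 a1 a2) = opL a0 a1 a2"
  unfolding opL_def
  by (simp add: phi_wadd phi_wsmul phi_wmul phi_basic)

lemma phi_opL2: "n \<ge> 1 \<Longrightarrow> phi (opL2 n) = Z"
  unfolding opL2_def
  by (cases n) (simp_all add: phi_wadd phi_wsmul phi_wmul phi_basic wpow_def)

lemma in_sub1_iff: "in_sub1 f \<longleftrightarrow> wfin f \<and> phi f = f"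
proof
  assume "in_sub1 f"
  then show "wfin f \<and> phi f = f"
    by (auto simp: in_sub1_def phi_def fun_eq_iff degree_0_id)
next
  assume a: "wfin f \<and> phi f = f"
  have h: "\<And>i j. f (i,j) = (if j = 0 then [:coeff (f (i,0)) 0:] else 0)" using a phi_apply by metis
  have "degree (f (i,0)) = 0" for i by (metis degree_pCons_0 h)
  moreover have "j \<noteq> 0 \<Longrightarrow> f (i,j) = 0" for i j by (metis h)
  ultimately show "in_sub1 f" using a by (auto simp: in_sub1_def)
qed

lemma wfin_phi: "wfin f \<Longrightarrow> wfin (phi f)"
  unfolding wfin_def
  by (rule finite_subset[of _ "{k. f k \<noteq> 0}"]) (auto simp: phi_def split: if_splits)

lemma phi_phi: "phi (phi f) = phi f"
  by (auto simp: phi_def fun_eq_iff)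

lemma wmul_wadd_right: "wmul f (wadd g h) = wadd (wmul f g) (wmul f h)"
  by (auto simp: wmul_def wadd_def fun_eq_iff distrib_left sum.distrib)

lemma Z_eq: "(\<lambda>_. 0) = Z" by (simp add: Z_def)

theorem proposition1:
  fixes n :: nat and a0 a1 a2 :: complex
  assumes "n \<ge> 1" and "a0 \<noteq> 0"
  shows "restrict_z2 (left_ideal_gen [opL1 n a0 a1 a2, opL2 n]) = sub1_left_ideal (opL a0 a1 a2)"
proof
  show "restrict_z2 (left_ideal_gen [opL1 n a0 a1 a2, opL2 n]) \<subseteq> sub1_left_ideal (opL a0 a1 a2)"
  proof
    fix A assume "A \<in> restrict_z2 (left_ideal_gen [opL1 n a0 a1 a2, opL2 n])"
    then obtain B1 B2 where A: "in_sub1 A" and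
      mem: "wadd A (wadd (wmul wz2 B1) (wmul wth2 B2)) \<in> left_ideal_gen [opL1 n a0 a1 a2, opL2 n]"
      unfolding restrict_z2_def by auto
    then obtain ps where ps: "wadd A (wadd (wmul wz2 B1) (wmul wth2 B2)) = foldr wadd (map2 wmul ps [opL1 n a0 a1 a2, opL2 n]) (\<lambda>_. 0)"
      "length ps = 2" "\<forall>p\<in>set ps. wfin p"
      unfolding left_ideal_gen_def by auto
    then obtain p1 p2 where p: "ps = [p1, p2]"
      by (metis (no_types, lifting) One_nat_def Suc_1 Suc_length_conv length_0_conv)
    have eq: "wadd A (wadd (wmul wz2 B1) (wmul wth2 B2)) = wadd (wmul p1 (opL1 n a0 a1 a2)) (wadd (wmul p2 (opL2 n)) Z)"
      using ps(1) by (simp add: p Z_eq)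
    have "phi (wadd A (wadd (wmul wz2 B1) (wmul wth2 B2))) = A"
      using A by (simp add: phi_wadd phi_wmul phi_basic in_sub1_iff)
    moreover have "phi (wadd (wmul p1 (opL1 n a0 a1 a2)) (wadd (wmul p2 (opL2 n)) Z)) = wmul (phi p1) (opL a0 a1 a2)"
      using assms(1) by (simp add: phi_wadd phi_wmul phi_basic phi_opL1 phi_opL2)
    ultimately have "A = wmul (phi p1) (opL a0 a1 a2)" using eq by simp
    moreover have "in_sub1 (phi p1)"
      using ps(3) p by (simp add: in_sub1_iff wfin_phi phi_phi)
    ultimately show "A \<in> sub1_left_ideal (opL a0 a1 a2)"
      unfolding sub1_left_ideal_def by blast
  qed
next
  show "sub1_left_ideal (opL a0 a1 a2) \<subseteq> restrict_z2 (left_ideal_gen [opL1 n a0 a1 a2, opL2 n])"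
  proof
    fix A assume "A \<in> sub1_left_ideal (opL a0 a1 a2)"
    then obtain Q where Q: "in_sub1 Q" and A: "A = wmul Q (opL a0 a1 a2)"
      unfolding sub1_left_ideal_def by auto
    have QZ: "j \<noteq> 0 \<Longrightarrow> Q (i,j) = 0" for i j using Q by (simp add: in_sub1_def)
    have inA: "in_sub1 A"
      using Q unfolding A in_sub1_iff by (simp add: wfin_wmul wfin_opL phi_wmul phi_opL)
    define R :: "complex poly poly" where "R = [:[:- of_nat n:]:] * ([:[:0,1:]:] * [:0,1:])"
    define B2 :: wop where "B2 = (\<lambda>(i,j). if j = 0 then Q (i,0) * ([:[:- of_nat n:]:] * [:[:0,1:]:]) else 0)"
    have sub: "{k. B2 k \<noteq> 0} \<subseteq> {k. Q k \<noteq> 0}"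
      unfolding B2_def by (auto split: if_splits)
    have wfB2: "wfin B2"
      using Q sub unfolding in_sub1_def wfin_def by (meson finite_subset)
    have W: "wmul wth1 wth2 = wconst ([:[:0,1:]:] * [:0,1:])"
    proof (rule ext, clarify)
      fix i j show "wmul wth1 wth2 (i,j) = wconst ([:[:0,1:]:] * [:0,1:]) (i,j)"
        unfolding wth2_def by (subst wmul_const_right) (simp add: wth1_def wconst_def)
    qed
    have X: "wsmul (- of_nat n) (wmul wth1 wth2) = wconst R"
      unfolding W by (auto simp: fun_eq_iff wsmul_def wconst_def R_def)
    have L1: "opL1 n a0 a1 a2 = wadd (wconst R) (opL a0 a1 a2)"
      unfolding opL1_def opL_def X[symmetric] by (simp add: wadd_def fun_eq_iff add.assoc)
    have key: "wadd A (wadd (wmul wz2 Z) (wmul wth2 B2)) = wmul Q (opL1 n a0 a1 a2)"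
    proof (rule ext, clarify)
      fix i j
      show "wadd A (wadd (wmul wz2 Z) (wmul wth2 B2)) (i,j) = wmul Q (opL1 n a0 a1 a2) (i,j)"
        unfolding L1 wmul_wadd_right wmul_Z_right A
        by (cases "j = 0") (simp_all add: wadd_def Z_def wth2_def wmul_const_left wmul_const_right
              wshift_th2 B2_def R_def QZ mult_ac)
    qed
    have "wadd A (wadd (wmul wz2 Z) (wmul wth2 B2)) \<in> left_ideal_gen [opL1 n a0 a1 a2, opL2 n]"
      unfolding left_ideal_gen_def
      by (rule CollectI, rule exI[of _ "[Q, Z]"])
         (use Q key in \<open>simp add: in_sub1_iff wfin_basic Z_eq\<close>)
    then show "A \<in> restrict_z2 (left_ideal_gen [opL1 n a0 a1 a2, opL2 n])"
      unfolding restrict_z2_def using inA wfB2 wfin_basic by blast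
  qed
qed

end
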